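(* Consider a decoder with center-convex decision regions operating in an additive noise channel $\mathbf r=\mathbf s+\sigma_0\boldsymbol\eta$ of arbitrary noise density, described in spherical coordinates by the joint density $f(r,\boldsymbol\theta)$ of the normalized noise amplitude $r=|\boldsymbol\eta|$ and the angles $\boldsymbol\theta$, and let $A=1/\sigma_0$. Then the average symbol error rate satisfies $P_e''(A)\ge0$ for all $A\in[A_1,A_2]$ provided $\partial f(r,\boldsymbol\theta)/\partial r\le0$ for all $\boldsymbol\theta$ and all $r\in[A_1d_{\min},A_2d_{\max}]$.
   Context: Setting: $\mathbf s\in\{\mathbf s_1,\dots,\mathbf s_M\}\subset\mathbb R^n$ with priors $\pi_k$; $\boldsymbol\eta$ is the normalized noise with a fixed distribution independent of $\mathbf s$, and $(r,\boldsymbol\theta)$ are its standard $n$-dimensional spherical coordinates; $f(r,\boldsymbol\theta)$ is differentiable in $r$. The decoder has pairwise disjoint decision regions $\Omega_k$ independent of $A$ (output $\mathbf s_k$ if $\mathbf r\in\Omega_k$, error if in none); $\Omega_k$ is center-convex if for every $\mathbf x\in\Omega_k$ the segment from $\mathbf s_k$ to $\mathbf x$ lies in $\Omega_k$. $P_e=\sum_k\pi_k(1-\Pr[\mathbf r\in\Omega_k\mid\mathbf s=\mathbf s_k])$. $d_{\min}$ ($d_{\max}$) is the minimum over $k$ of the minimum distance (maximum over $k$ of the maximum distance) from $\mathbf s_k$ to the boundary of $\Omega_k$. The noise need not be i.i.d. across dimensions. *)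

theory Defs
  imports "HOL-Analysis.Analysis" "HOL-Probability.Probability"
begin

text \<open>Euclidean n-space is modelled as real^'n where the index type 'n is finite
  and well-ordered; the order fixes the numbering x_1,...,x_n of the coordinates.\<close>

definition coord_pos :: "'n::{finite,wellorder} \<Rightarrow> nat" where
  "coord_pos i = card {j. j < i}"

text \<open>Standard n-dimensional spherical coordinates (n = CARD('n) >= 2), 0-based:
  angles theta_0..theta_(n-2);
  x_j = r * sin theta_0 * ... * sin theta_(j-1) * cos theta_j   for j < n-1,
  x_(n-1) = r * sin theta_0 * ... * sin theta_(n-2).\<close>

definition sph :: "real \<Rightarrow> (nat \<Rightarrow> real) \<Rightarrow> real ^ 'n::{finite,wellorder}" where
  "sph r \<theta> = (\<chi> i. let j = coord_pos i in
      r * (\<Prod>l<j. sin (\<theta> l)) * (if j = CARD('n) - 1 then 1 else cos (\<theta> j)))"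

definition sph_angles :: "nat \<Rightarrow> (nat \<Rightarrow> real) set" where
  "sph_angles n = {\<theta> \<in> PiE {..<n - 1} (\<lambda>_. UNIV).
      (\<forall>l < n - 2. 0 \<le> \<theta> l \<and> \<theta> l \<le> pi) \<and> 0 \<le> \<theta> (n - 2) \<and> \<theta> (n - 2) < 2 * pi}"

definition sph_space :: "nat \<Rightarrow> (real \<times> (nat \<Rightarrow> real)) measure" where
  "sph_space n = lborel \<Otimes>\<^sub>M PiM {..<n - 1} (\<lambda>_. lborel)"

definition sph_dom :: "nat \<Rightarrow> (real \<times> (nat \<Rightarrow> real)) set" where
  "sph_dom n = {0<..} \<times> sph_angles n"

text \<open>Distribution of the normalized noise eta whose spherical coordinates (r, theta)
  have joint density f(r, theta).\<close>

definition noise_distr :: "(real \<Rightarrow> (nat \<Rightarrow> real) \<Rightarrow> real) \<Rightarrow> (real ^ 'n::{finite,wellorder}) measure" where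
  "noise_distr f = distr
     (density (sph_space CARD('n))
        (\<lambda>(r, \<theta>). ennreal (f r \<theta>) * indicator (sph_dom CARD('n)) (r, \<theta>)))
     borel (\<lambda>(r, \<theta>). sph r \<theta>)"

definition center_convex :: "'a::real_vector \<Rightarrow> 'a set \<Rightarrow> bool" where
  "center_convex c \<Omega> \<longleftrightarrow> (\<forall>x\<in>\<Omega>. closed_segment c x \<subseteq> \<Omega>)"

text \<open>Average symbol error rate as a function of A = 1/sigma_0, for the channel
  r = s + sigma_0 eta: symbols s 0..s (M-1), priors p, regions Om.\<close>

definition sym_err_rate ::
  "nat \<Rightarrow> (nat \<Rightarrow> real) \<Rightarrow> (nat \<Rightarrow> 'a::euclidean_space) \<Rightarrow> (nat \<Rightarrow> 'a set) \<Rightarrow> 'a measure \<Rightarrow> real \<Rightarrow> real" where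
  "sym_err_rate M p s Om N A =
     (\<Sum>k<M. p k * (1 - measure N {x \<in> space N. s k + (1 / A) *\<^sub>R x \<in> Om k}))"

text \<open>d_min: minimum over k of the distance from s_k to the boundary of Omega_k
  (regions with empty boundary impose no constraint); d_max: maximum over k of the
  supremum of distances from s_k to boundary points (possibly infinite).\<close>

definition d_min :: "nat \<Rightarrow> (nat \<Rightarrow> 'a::euclidean_space) \<Rightarrow> (nat \<Rightarrow> 'a set) \<Rightarrow> ereal" where
  "d_min M s Om = (INF k\<in>{k. k < M \<and> frontier (Om k) \<noteq> {}}. ereal (infdist (s k) (frontier (Om k))))"

definition d_max :: "nat \<Rightarrow> (nat \<Rightarrow> 'a::euclidean_space) \<Rightarrow> (nat \<Rightarrow> 'a set) \<Rightarrow> ereal" where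
  "d_max M s Om = (SUP k\<in>{..<M}. SUP b\<in>frontier (Om k). ereal (dist (s k) b))"

end

theory Submission
  imports Defs
begin


lemma coord_pos_mono:
  fixes i j :: "'n::{finite,wellorder}"
  assumes "i < j" shows "coord_pos i < coord_pos j"
proof -
  have "{k. k < i} \<subset> {k. k < j}" using assms by auto
  then show ?thesis unfolding coord_pos_def by (simp add: psubset_card_mono)
qed

lemma coord_pos_inj: "inj (coord_pos :: 'n::{finite,wellorder} \<Rightarrow> nat)"
  by (metis coord_pos_mono injI less_irrefl linorder_neqE)

lemma coord_pos_lt: "coord_pos (i::'n::{finite,wellorder}) < CARD('n)"
proof -
  have "{k. k < i} \<subset> UNIV" by auto
  then show ?thesis unfolding coord_pos_def by (simp add: psubset_card_mono)
qed

lemma coord_pos_image: "coord_pos ` (UNIV :: 'n::{finite,wellorder} set) = {..<CARD('n)}"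
proof (rule card_subset_eq)
  show "finite {..<CARD('n)}" by simp
  show "coord_pos ` (UNIV :: 'n set) \<subseteq> {..<CARD('n)}" using coord_pos_lt by auto
  show "card (coord_pos ` (UNIV :: 'n set)) = card {..<CARD('n)}"
    using card_image[OF coord_pos_inj] by simp
qed

lemma sum_coord_pos:
  "(\<Sum>i\<in>(UNIV::'n::{finite,wellorder} set). g (coord_pos i)) = (\<Sum>j<CARD('n). g j)"
  by (metis (no_types, lifting) coord_pos_image coord_pos_inj inj_on_subset subset_UNIV sum.reindex_cong)

lemma sph_scale: "sph r \<theta> = r *\<^sub>R (sph 1 \<theta> :: real ^ 'n::{finite,wellorder})"
  by (simp add: sph_def vec_eq_iff Let_def)

lemma sin_cos_tele:
  fixes m :: nat and \<theta> :: "nat \<Rightarrow> real"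
  shows "(\<Sum>j<m. (\<Prod>l<j. (sin (\<theta> l))\<^sup>2) * (cos (\<theta> j))\<^sup>2) + (\<Prod>l<m. (sin (\<theta> l))\<^sup>2) = 1"
proof (induction m)
  case 0 then show ?case by simp
next
  case (Suc m)
  have "(\<Prod>l<Suc m. (sin (\<theta> l))\<^sup>2) = (\<Prod>l<m. (sin (\<theta> l))\<^sup>2) * (sin (\<theta> m))\<^sup>2" by simp
  moreover have "(\<Prod>l<m. (sin (\<theta> l))\<^sup>2) * (cos (\<theta> m))\<^sup>2 + (\<Prod>l<m. (sin (\<theta> l))\<^sup>2) * (sin (\<theta> m))\<^sup>2
      = (\<Prod>l<m. (sin (\<theta> l))\<^sup>2)"
    by (metis distrib_left mult.right_neutral sin_cos_squared_add add.commute)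
  ultimately show ?case using Suc by simp
qed

lemma norm_sph1:
  assumes "CARD('n::{finite,wellorder}) \<ge> 2"
  shows "norm (sph 1 \<theta> :: real ^ 'n::{finite,wellorder}) = 1"
proof -
  let ?n = "CARD('n)"
  define c where "c j = (\<Prod>l<j. sin (\<theta> l)) * (if j = ?n - 1 then 1 else cos (\<theta> j))" for j
  have comp: "sph 1 \<theta> $ i = c (coord_pos i)" for i :: 'n
    by (simp add: sph_def c_def Let_def)
  have "(norm (sph 1 \<theta> :: real ^ 'n::{finite,wellorder}))\<^sup>2 = (\<Sum>i\<in>(UNIV::'n::{finite,wellorder} set). ((sph 1 \<theta> :: real ^ 'n::{finite,wellorder}) $ i)\<^sup>2)"
    by (simp add: norm_vec_def L2_set_def sum_nonneg)
  also have "\<dots> = (\<Sum>j<?n. (c j)\<^sup>2)" unfolding comp by (rule sum_coord_pos)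
  also have "\<dots> = (\<Sum>j<?n - 1. (c j)\<^sup>2) + (c (?n - 1))\<^sup>2"
    using assms by (metis (no_types, lifting) Suc_diff_1 le_trans less_one not_le pos2 sum.lessThan_Suc
        less_le_trans)
  also have "\<dots> = (\<Sum>j<?n - 1. (\<Prod>l<j. (sin (\<theta> l))\<^sup>2) * (cos (\<theta> j))\<^sup>2) + (\<Prod>l<?n - 1. (sin (\<theta> l))\<^sup>2)"
    by (simp add: c_def power_mult_distrib prod_power_distrib)
  also have "\<dots> = 1" by (rule sin_cos_tele)
  finally have "(norm (sph 1 \<theta> :: real ^ 'n::{finite,wellorder}))\<^sup>2 = 1" .
  then show ?thesis by (smt (verit) norm_ge_zero power2_eq_1_iff)
qed




definition Hdir :: "'a::euclidean_space \<Rightarrow> 'a \<Rightarrow> 'a set \<Rightarrow> (real \<Rightarrow> real) \<Rightarrow> real \<Rightarrow> ennreal" where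
  "Hdir s u Om \<phi> X = (\<integral>\<^sup>+ r. ennreal (\<phi> r) * indicator {0<..} r * indicator {r. s + (r / X) *\<^sub>R u \<in> Om} r \<partial>lborel)"

lemma ennreal_concave_arith:
  fixes a b HA Y Z :: ennreal
  assumes "b * Z \<le> a * Y"
  shows "a * HA + b * (HA + Y + Z) \<le> (a + b) * (HA + Y)"
proof -
  have "a * HA + b * (HA + Y + Z) = a * HA + b * HA + b * Y + b * Z" by (simp add: algebra_simps)
  also have "\<dots> \<le> a * HA + b * HA + b * Y + a * Y" using assms by (intro add_mono) auto
  also have "\<dots> = (a + b) * (HA + Y)" by (simp add: algebra_simps)
  finally show ?thesis .
qed

lemma star_step:
  fixes s u :: "'a::euclidean_space"
  assumes cc: "center_convex s Om" and t: "0 < t" "s + t *\<^sub>R u \<in> Om" and t': "0 < t'" "t' \<le> t"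
  shows "s + t' *\<^sub>R u \<in> Om"
proof -
  have eq: "(1 - t'/t) *\<^sub>R s + (t'/t) *\<^sub>R (s + t *\<^sub>R u) = s + t' *\<^sub>R u"
    using t by (simp add: algebra_simps)
  have "s + t' *\<^sub>R u \<in> closed_segment s (s + t *\<^sub>R u)"
    unfolding closed_segment_def
    apply (rule CollectI, rule exI[where x="t'/t"])
    using t t' eq by auto
  then show ?thesis using cc t unfolding center_convex_def by blast
qed

lemma per_dir:
  fixes s u :: "'a::euclidean_space" and \<phi> \<phi>' :: "real \<Rightarrow> real" and dmin dmax :: ereal
    and La Ua A B C :: real
  assumes u: "norm u = 1" and cc: "center_convex s Om"
    and \<phi>m: "\<phi> \<in> borel_measurable lborel"
    and der: "\<forall>r>0. (\<phi> has_real_derivative \<phi>' r) (at r)"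
    and dec: "\<forall>r>0. ereal La * dmin \<le> ereal r \<and> ereal r \<le> ereal Ua * dmax \<longrightarrow> \<phi>' r \<le> 0"
    and fr: "\<forall>b\<in>frontier Om. dmin \<le> ereal (dist s b) \<and> ereal (dist s b) \<le> dmax"
    and A: "0 < La" "La \<le> A" "A < B" "B < C" "C \<le> Ua"
  shows "ennreal (C-B) * Hdir s u Om \<phi> A + ennreal (B-A) * Hdir s u Om \<phi> C \<le> ennreal (C-A) * Hdir s u Om \<phi> B"
proof -
  define S where "S = {t. 0 < t \<and> s + t *\<^sub>R u \<in> Om}"
  have star: "t \<in> S \<Longrightarrow> 0 < t' \<Longrightarrow> t' \<le> t \<Longrightarrow> t' \<in> S" for t t'
    using star_step[OF cc] unfolding S_def by blast
  have CA: "ennreal (C-A) = ennreal (C-B) + ennreal (B-A)"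
    using A by (subst ennreal_plus[symmetric]) auto
  have ind_eq: "indicator {r. s + (r / X) *\<^sub>R u \<in> Om} r = (indicator S (r / X) :: ennreal)" if "r > 0" "X > 0" for r X
    using that by (auto simp: S_def indicator_def)
  show ?thesis
  proof (cases "\<forall>t>0. t \<in> S")
    case True
    define V where "V = (\<integral>\<^sup>+ r. ennreal (\<phi> r) * indicator {0<..} r \<partial>lborel)"
    have HV: "Hdir s u Om \<phi> X = V" if "X > 0" for X
      unfolding Hdir_def V_def
    proof (rule nn_integral_cong)
      fix r :: real
      show "ennreal (\<phi> r) * indicator {0<..} r * indicator {r. s + (r / X) *\<^sub>R u \<in> Om} r =
            ennreal (\<phi> r) * indicator {0<..} r"
      proof (cases "r > 0")
        case True then show ?thesis using ind_eq[of r X] \<open>X > 0\<close> \<open>\<forall>t>0. t \<in> S\<close> by simp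
      qed simp
    qed
    show ?thesis using A by (simp add: HV CA distrib_right)
  next
    case False
    then obtain t0 where t0: "t0 > 0" "t0 \<notin> S" by auto
    have Sb: "t \<in> S \<Longrightarrow> t < t0" for t using star t0 by force
    show ?thesis
    proof (cases "S = {}")
      case True
      have H0: "Hdir s u Om \<phi> X = 0" if "X > 0" for X
        unfolding Hdir_def
      proof (rule nn_integral_zero')
        show "AE r in lborel. ennreal (\<phi> r) * indicator {0<..} r * indicator {r. s + (r / X) *\<^sub>R u \<in> Om} r = 0"
        proof (rule AE_I2)
          fix r :: real
          show "ennreal (\<phi> r) * indicator {0<..} r * indicator {r. s + (r / X) *\<^sub>R u \<in> Om} r = 0"
            using ind_eq[of r X] \<open>X > 0\<close> True by (cases "r > 0") auto
        qed
      qed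
      show ?thesis using A by (simp add: H0)
    next
      case False
      have bdd: "bdd_above S" using Sb by (meson bdd_aboveI less_imp_le)
      define R where "R = Sup S"
      obtain t1 where t1: "t1 \<in> S" using False by auto
      have "t1 \<le> R" unfolding R_def using bdd t1 by (simp add: cSup_upper)
      moreover have "t1 > 0" using t1 S_def by auto
      ultimately have Rpos: "R > 0" by simp
      have inS: "0 < t \<Longrightarrow> t < R \<Longrightarrow> t \<in> S" for t
        using less_cSup_iff[OF False bdd, of t] star unfolding R_def by (meson less_imp_le)
      have outS: "t > R \<Longrightarrow> t \<notin> S" for t
        using cSup_upper[OF _ bdd] unfolding R_def by force
      define p where "p = s + R *\<^sub>R u"
      have p_cl: "p \<in> closure Om"
      proof (rule closure_approachable[THEN iffD2], intro allI impI)
        fix e :: real assume e: "e > 0"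
        define t where "t = max (R / 2) (R - e / 2)"
        have "0 < t" "t < R" using Rpos e by (auto simp: t_def)
        then have "s + t *\<^sub>R u \<in> Om" using inS S_def by auto
        moreover have "dist (s + t *\<^sub>R u) p < e"
          using Rpos e u by (auto simp: p_def dist_norm t_def algebra_simps simp flip: scaleR_diff_left)
        ultimately show "\<exists>x\<in>Om. dist x p < e" by blast
      qed
      have p_int: "p \<notin> interior Om"
      proof
        assume "p \<in> interior Om"
        then obtain e where e: "e > 0" "ball p e \<subseteq> Om" by (meson mem_interior)
        define t where "t = R + e / 2"
        have "s + t *\<^sub>R u \<in> ball p e"
          using e u by (auto simp: p_def t_def dist_norm algebra_simps)
        then have "t \<in> S" using e Rpos unfolding S_def t_def by auto
        moreover have "t > R" using e t_def by simp
        ultimately show False using outS by blast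
      qed
      have "p \<in> frontier Om" using p_cl p_int by (simp add: frontier_def)
      moreover have "dist s p = R" using u Rpos by (simp add: p_def dist_norm)
      ultimately have dR: "dmin \<le> ereal R" "ereal R \<le> dmax" using fr by auto
      define G where "G X = (\<integral>\<^sup>+ r. ennreal (\<phi> r) * indicator {0<..<X * R} r \<partial>lborel)" for X
      have HG: "Hdir s u Om \<phi> X = G X" if "X > 0" for X
        unfolding Hdir_def G_def
      proof (rule nn_integral_cong_AE)
        show "AE r in lborel. ennreal (\<phi> r) * indicator {0<..} r * indicator {r. s + (r / X) *\<^sub>R u \<in> Om} r =
            ennreal (\<phi> r) * indicator {0<..<X * R} r"
          using AE_lborel_singleton[of "X * R"]
        proof (rule AE_mp, intro AE_I2 impI)
          fix r :: real assume rne: "r \<noteq> X * R"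
          show "ennreal (\<phi> r) * indicator {0<..} r * indicator {r. s + (r / X) *\<^sub>R u \<in> Om} r =
            ennreal (\<phi> r) * indicator {0<..<X * R} r"
          proof (cases "r > 0")
            case True
            have "r / X < R \<longleftrightarrow> r < X * R" using \<open>X > 0\<close> by (simp add: divide_less_eq mult.commute)
            moreover have "r / X \<noteq> R" using rne \<open>X > 0\<close> by (auto simp: field_simps)
            moreover have "r / X > 0" using True \<open>X > 0\<close> by simp
            ultimately have "(r / X \<in> S) \<longleftrightarrow> r < X * R" using inS outS by (meson linorder_neqE_linordered_idom)
            then show ?thesis using ind_eq[of r X] True \<open>X > 0\<close> by (auto simp: indicator_def)
          qed simp
        qed
      qed
      have dneg: "\<phi>' r \<le> 0" if "La * R \<le> r" "r \<le> Ua * R" for r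
      proof -
        have r0: "r > 0" using that A Rpos by (smt (verit) mult_pos_pos)
        have "ereal La * dmin \<le> ereal La * ereal R"
          using dR A by (intro ereal_mult_left_mono) auto
        also have "\<dots> \<le> ereal r" using that by simp
        finally have l: "ereal La * dmin \<le> ereal r" .
        have "ereal r \<le> ereal Ua * ereal R" using that by simp
        also have "\<dots> \<le> ereal Ua * dmax"
          using dR A by (intro ereal_mult_left_mono) auto
        finally show ?thesis using dec r0 l by blast
      qed
      have mono: "\<phi> y \<le> \<phi> x" if "La * R \<le> x" "x \<le> y" "y \<le> Ua * R" for x y
      proof (rule DERIV_nonpos_imp_nonincreasing[OF \<open>x \<le> y\<close>])
        fix z assume z: "x \<le> z" "z \<le> y"
        have "z > 0" using z that A Rpos by (smt (verit) mult_pos_pos)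
        then show "\<exists>d. (\<phi> has_real_derivative d) (at z) \<and> d \<le> 0"
          using der dneg[of z] z that by auto
      qed
      have AR: "La * R \<le> A * R" "A * R < B * R" "B * R < C * R" "C * R \<le> Ua * R"
        using A Rpos by (auto intro: mult_right_mono)
      have ARpos: "0 < A * R" using A Rpos by simp
      define Y where "Y = (\<integral>\<^sup>+ r. ennreal (\<phi> r) * indicator {A * R..<B * R} r \<partial>lborel)"
      define Z where "Z = (\<integral>\<^sup>+ r. ennreal (\<phi> r) * indicator {B * R..<C * R} r \<partial>lborel)"
      have split: "(\<integral>\<^sup>+ r. ennreal (\<phi> r) * indicator {0<..<b} r \<partial>lborel) =
          (\<integral>\<^sup>+ r. ennreal (\<phi> r) * indicator {0<..<a} r \<partial>lborel) +
          (\<integral>\<^sup>+ r. ennreal (\<phi> r) * indicator {a..<b} r \<partial>lborel)" if "0 < a" "a \<le> b" for a b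
      proof -
        have "(\<integral>\<^sup>+ r. ennreal (\<phi> r) * indicator {0<..<b} r \<partial>lborel) =
            (\<integral>\<^sup>+ r. ennreal (\<phi> r) * indicator {0<..<a} r + ennreal (\<phi> r) * indicator {a..<b} r \<partial>lborel)"
          using that by (intro nn_integral_cong) (auto simp: indicator_def)
        also have "\<dots> = (\<integral>\<^sup>+ r. ennreal (\<phi> r) * indicator {0<..<a} r \<partial>lborel) +
          (\<integral>\<^sup>+ r. ennreal (\<phi> r) * indicator {a..<b} r \<partial>lborel)" using \<phi>m by (intro nn_integral_add) auto
        finally show ?thesis .
      qed
      have GB: "G B = G A + Y" unfolding G_def Y_def using split[of "A*R" "B*R"] ARpos AR by simp
      have GC: "G C = G A + Y + Z"
        unfolding G_def Y_def Z_def using split[of "A*R" "B*R"] split[of "B*R" "C*R"] ARpos AR by simp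
      define c where "c = ennreal (\<phi> (B * R))"
      have Ylow: "c * ennreal ((B - A) * R) \<le> Y"
      proof -
        have "c * ennreal ((B - A) * R) = (\<integral>\<^sup>+ r. c * indicator {A * R..<B * R} r \<partial>lborel)"
          using AR by (simp add: nn_integral_cmult_indicator algebra_simps)
        also have "\<dots> \<le> Y" unfolding Y_def c_def
          using AR by (intro nn_integral_mono) (auto simp: indicator_def intro!: ennreal_leI mono)
        finally show ?thesis .
      qed
      have Zup: "Z \<le> c * ennreal ((C - B) * R)"
      proof -
        have "Z \<le> (\<integral>\<^sup>+ r. c * indicator {B * R..<C * R} r \<partial>lborel)" unfolding Z_def c_def
          using AR by (intro nn_integral_mono) (auto simp: indicator_def intro!: ennreal_leI mono)
        also have "\<dots> = c * ennreal ((C - B) * R)"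
          using AR by (simp add: nn_integral_cmult_indicator algebra_simps)
        finally show ?thesis .
      qed
      have key: "ennreal (B-A) * Z \<le> ennreal (C-B) * Y"
      proof -
        have "ennreal (B-A) * Z \<le> ennreal (B-A) * (c * ennreal ((C - B) * R))"
          using Zup by (intro mult_left_mono) auto
        also have "\<dots> = c * ennreal ((B-A) * ((C - B) * R))"
          using A Rpos by (simp add: ennreal_mult ac_simps)
        also have "\<dots> = ennreal (C-B) * (c * ennreal ((B - A) * R))"
          using A Rpos by (simp add: ennreal_mult ac_simps)
        also have "\<dots> \<le> ennreal (C-B) * Y"
          using Ylow by (intro mult_left_mono) auto
        finally show ?thesis .
      qed
      have pos: "A > 0" "B > 0" "C > 0" using A by auto
      show ?thesis
        unfolding HG[OF pos(1)] HG[OF pos(2)] HG[OF pos(3)] GB GC CA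
        by (rule ennreal_concave_arith[OF key])
    qed
  qed
qed




lemma angles_sets:
  assumes "n \<ge> 2"
  shows "sph_angles n \<in> sets (PiM {..<n - 1} (\<lambda>_. lborel))"
proof -
  have "sph_angles n = PiE {..<n - 1} (\<lambda>l. if l < n - 2 then {0..pi} else {0..<2*pi})"
  proof (intro set_eqI iffI)
    fix \<theta> assume "\<theta> \<in> sph_angles n"
    then show "\<theta> \<in> PiE {..<n - 1} (\<lambda>l. if l < n - 2 then {0..pi} else {0..<2*pi})"
      unfolding sph_angles_def using assms
      by (auto simp: PiE_iff) (metis Suc_diff_Suc diff_Suc_1 less_Suc_eq numeral_2_eq_2 less_le_trans pos2)+
  next
    fix \<theta> assume th: "\<theta> \<in> PiE {..<n - 1} (\<lambda>l. if l < n - 2 then {0..pi} else {0..<2*pi})"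
    have "n - 2 < n - 1" using assms by simp
    then have "n - 2 \<in> {..<n - 1}" by simp
    from PiE_mem[OF th this] have "\<theta> (n - 2) \<in> {0..<2*pi}" by simp
    then have h: "0 \<le> \<theta> (n - 2)" "\<theta> (n - 2) < 2*pi" by auto
    have "\<forall>l<n - 2. 0 \<le> \<theta> l \<and> \<theta> l \<le> pi"
    proof (intro allI impI)
      fix l assume l: "l < n - 2"
      then have "l \<in> {..<n - 1}" by simp
      from PiE_mem[OF th this] l show "0 \<le> \<theta> l \<and> \<theta> l \<le> pi" by simp
    qed
    then show "\<theta> \<in> sph_angles n"
      using th h unfolding sph_angles_def by (auto simp: PiE_iff)
  qed
  then show ?thesis by (auto intro!: sets_PiM_I_finite)
qed

lemma comp_snd_meas:
  assumes "l < n - 1"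
  shows "(\<lambda>z. snd z l) \<in> borel_measurable (sph_space n)"
  unfolding sph_space_def
  using measurable_compose[OF measurable_snd measurable_component_singleton[of l "{..<n - 1}" "\<lambda>_. lborel"]] assms
  by auto

lemma sph_meas:
  "(\<lambda>(r, \<theta>). sph r \<theta> :: real ^ 'n::{finite,wellorder}) \<in> borel_measurable (sph_space CARD('n::{finite,wellorder}))"
proof -
  let ?n = "CARD('n::{finite,wellorder})"
  have comp: "(\<lambda>z. (sph (fst z) (snd z) :: real ^ 'n::{finite,wellorder}) $ i) \<in> borel_measurable (sph_space ?n)" for i
  proof -
    define j where "j = coord_pos i"
    have jn: "j < ?n" using coord_pos_lt j_def by auto
    have eq: "(\<lambda>z. (sph (fst z) (snd z) :: real ^ 'n::{finite,wellorder}) $ i) =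
      (\<lambda>z. fst z * (\<Prod>l<j. sin (snd z l)) * (if j = ?n - 1 then 1 else cos (snd z j)))"
      by (auto simp: sph_def j_def Let_def)
    have pm: "(\<lambda>z. \<Prod>l<j. sin (snd z l)) \<in> borel_measurable (sph_space ?n)"
      by (rule borel_measurable_prod, rule measurable_compose[OF comp_snd_meas]) (use jn in auto)
    have cm: "(\<lambda>z. (if j = ?n - 1 then 1 else cos (snd z j))) \<in> borel_measurable (sph_space ?n)"
    proof (cases "j = ?n - 1")
      case False
      then have "j < ?n - 1" using jn by simp
      then show ?thesis using False measurable_compose[OF comp_snd_meas[of j] borel_measurable_cos] by simp
    qed simp
    have fm: "fst \<in> borel_measurable (sph_space ?n)" unfolding sph_space_def by simp
    show ?thesis unfolding eq using fm pm cm by (intro borel_measurable_times) auto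
  qed
  show ?thesis
    unfolding borel_measurable_euclidean_space[where 'c="real ^ 'n::{finite,wellorder}"]
  proof
    fix b :: "real ^ 'n::{finite,wellorder}" assume "b \<in> Basis"
    then obtain i where b: "b = axis i 1" by (auto simp: Basis_vec_def)
    show "(\<lambda>x. (case x of (r, \<theta>) \<Rightarrow> sph r \<theta>) \<bullet> b) \<in> borel_measurable (sph_space ?n)"
      using comp[of i] by (simp add: b inner_axis case_prod_beta)
  qed
qed




lemma concave_k:
  fixes s :: "real ^ 'n::{finite,wellorder}" and Om :: "(real ^ 'n::{finite,wellorder}) set"
    and f f' :: "real \<Rightarrow> (nat \<Rightarrow> real) \<Rightarrow> real" and dmin dmax :: ereal
  assumes dim: "CARD('n::{finite,wellorder}) \<ge> 2"
    and Om: "Om \<in> sets borel" and cc: "center_convex s Om"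
    and f_meas: "(\<lambda>(r, \<theta>). f r \<theta>) \<in> borel_measurable (sph_space CARD('n::{finite,wellorder}))"
    and f_diff: "\<forall>\<theta> \<in> sph_angles CARD('n::{finite,wellorder}). \<forall>r > 0.
                   ((\<lambda>\<rho>. f \<rho> \<theta>) has_real_derivative f' r \<theta>) (at r)"
    and f_decr: "\<forall>\<theta> \<in> sph_angles CARD('n::{finite,wellorder}). \<forall>r > 0.
                   ereal La * dmin \<le> ereal r \<and> ereal r \<le> ereal Ua * dmax \<longrightarrow> f' r \<theta> \<le> 0"
    and fr: "\<forall>b\<in>frontier Om. dmin \<le> ereal (dist s b) \<and> ereal (dist s b) \<le> dmax"
    and A: "0 < La" "La \<le> A" "A < B" "B < C" "C \<le> Ua"
  shows "ennreal (C-B) * emeasure (noise_distr f) {x. s + (1/A) *\<^sub>R x \<in> Om}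
       + ennreal (B-A) * emeasure (noise_distr f) {x. s + (1/C) *\<^sub>R x \<in> Om}
       \<le> ennreal (C-A) * emeasure (noise_distr f) {x. s + (1/B) *\<^sub>R x \<in> Om}"
proof -
  define n where "n = CARD('n::{finite,wellorder})"
  define M2 where "M2 = PiM {..<n - 1} (\<lambda>_. lborel :: real measure)"
  have SP: "sph_space n = lborel \<Otimes>\<^sub>M M2" unfolding sph_space_def M2_def ..
  interpret PS: product_sigma_finite "\<lambda>_. lborel :: real measure" by standard
  have sfM2: "sigma_finite_measure M2" unfolding M2_def by (rule PS.sigma_finite) simp
  interpret P: pair_sigma_finite lborel M2
    using sfM2 by (simp add: pair_sigma_finite_def sigma_finite_lborel)
  have n2: "n \<ge> 2" using dim n_def by simp
  have dom_sets: "sph_dom n \<in> sets (sph_space n)"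
    unfolding sph_dom_def SP using angles_sets[OF n2] by (auto simp: M2_def)
  define dens where "dens = (\<lambda>(r, \<theta>). ennreal (f r \<theta>) * indicator (sph_dom n) (r, \<theta>))"
  have dens_m: "dens \<in> borel_measurable (sph_space n)"
  proof -
    have fm: "(\<lambda>(r, \<theta>). f r \<theta>) \<in> borel_measurable (sph_space n)" using f_meas n_def by simp
    have "(\<lambda>z. ennreal ((\<lambda>(r,\<theta>). f r \<theta>) z) * indicator (sph_dom n) z) \<in> borel_measurable (sph_space n)"
      using dom_sets by (intro borel_measurable_times_ennreal measurable_compose[OF fm measurable_ennreal]
          borel_measurable_indicator)
    moreover have "(\<lambda>z. ennreal ((\<lambda>(r,\<theta>). f r \<theta>) z) * indicator (sph_dom n) z) = dens"
      unfolding dens_def by (auto simp: fun_eq_iff)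
    ultimately show ?thesis by simp
  qed
  define g where "g = (\<lambda>(r, \<theta>). sph r \<theta> :: real ^ 'n::{finite,wellorder})"
  have g_m: "g \<in> borel_measurable (sph_space n)" unfolding g_def n_def by (rule sph_meas)
  define F where "F X = (\<lambda>z. dens z * indicator Om (s + (1/X) *\<^sub>R g z))" for X
  have F_m: "F X \<in> borel_measurable (sph_space n)" for X
  proof -
    have "(\<lambda>z. s + (1/X) *\<^sub>R g z) \<in> borel_measurable (sph_space n)" using g_m by measurable
    then have "(\<lambda>z. indicator Om (s + (1/X) *\<^sub>R g z) :: ennreal) \<in> borel_measurable (sph_space n)"
      using Om by (intro measurable_compose[OF _ borel_measurable_indicator]) auto
    then show ?thesis unfolding F_def using dens_m by (intro borel_measurable_times_ennreal) auto
  qed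
  have mu: "emeasure (noise_distr f) {x. s + (1/X) *\<^sub>R x \<in> Om} = integral\<^sup>N (sph_space n) (F X)" for X
  proof -
    have E: "{x. s + (1/X) *\<^sub>R x \<in> Om} \<in> sets borel"
    proof -
      have "(\<lambda>x::real ^ 'n::{finite,wellorder}. s + (1/X) *\<^sub>R x) \<in> borel_measurable borel" by measurable
      from measurable_sets[OF this Om] show ?thesis by (simp add: vimage_def)
    qed
    have "emeasure (noise_distr f) {x. s + (1/X) *\<^sub>R x \<in> Om}
        = emeasure (density (sph_space n) dens) (g -` {x. s + (1/X) *\<^sub>R x \<in> Om} \<inter> space (sph_space n))"
      unfolding noise_distr_def n_def[symmetric] dens_def[symmetric] g_def[symmetric]
      using g_m E by (subst emeasure_distr) auto
    also have "\<dots> = (\<integral>\<^sup>+ z. dens z * indicator (g -` {x. s + (1/X) *\<^sub>R x \<in> Om} \<inter> space (sph_space n)) z \<partial>sph_space n)"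
      using dens_m measurable_sets[OF g_m E] by (rule emeasure_density)
    also have "\<dots> = integral\<^sup>N (sph_space n) (F X)"
      unfolding F_def by (intro nn_integral_cong) (auto simp: indicator_def)
    finally show ?thesis .
  qed
  have Fr_m: "(\<lambda>r. F X (r, \<theta>)) \<in> borel_measurable lborel" if "\<theta> \<in> space M2" for X \<theta>
    using measurable_compose[OF measurable_Pair2'[OF that] F_m[of X, unfolded SP]] by simp
  have Fzero: "F X (r, \<theta>) = 0" if "\<theta> \<notin> sph_angles n" for X r \<theta>
    using that by (simp add: F_def dens_def sph_dom_def)
  have FH: "(\<integral>\<^sup>+ r. F X (r, \<theta>) \<partial>lborel) = Hdir s (sph 1 \<theta>) Om (\<lambda>r. f r \<theta>) X"
    if "\<theta> \<in> sph_angles n" for X \<theta>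
    unfolding Hdir_def
  proof (rule nn_integral_cong)
    fix r :: real
    have "(1 / X) *\<^sub>R sph r \<theta> = (r / X) *\<^sub>R (sph 1 \<theta> :: real ^ 'n::{finite,wellorder})"
      by (subst sph_scale) simp
    then show "F X (r, \<theta>) = ennreal (f r \<theta>) * indicator {0<..} r * indicator {r. s + (r / X) *\<^sub>R sph 1 \<theta> \<in> Om} r"
      using that by (simp add: F_def dens_def g_def sph_dom_def indicator_def)
  qed
  have inner: "ennreal (C-B) * (\<integral>\<^sup>+ r. F A (r, \<theta>) \<partial>lborel) + ennreal (B-A) * (\<integral>\<^sup>+ r. F C (r, \<theta>) \<partial>lborel)
      \<le> ennreal (C-A) * (\<integral>\<^sup>+ r. F B (r, \<theta>) \<partial>lborel)" if th: "\<theta> \<in> space M2" for \<theta>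
  proof (cases "\<theta> \<in> sph_angles n")
    case True
    have phim: "(\<lambda>r. f r \<theta>) \<in> borel_measurable lborel"
    proof -
      have fm: "(\<lambda>(r, \<theta>). f r \<theta>) \<in> borel_measurable (lborel \<Otimes>\<^sub>M M2)" using f_meas n_def SP by simp
      show ?thesis using measurable_compose[OF measurable_Pair2'[OF th] fm] by simp
    qed
    show ?thesis unfolding FH[OF True]
    proof (rule per_dir[where \<phi>'="\<lambda>r. f' r \<theta>" and La=La and Ua=Ua and dmin=dmin and dmax=dmax])
      show "norm (sph 1 \<theta> :: real ^ 'n::{finite,wellorder}) = 1" using norm_sph1 dim by blast
    qed (use cc phim f_diff f_decr fr A True n_def in auto)
  qed (simp add: Fzero)
  have "ennreal (C-B) * integral\<^sup>N (sph_space n) (F A) + ennreal (B-A) * integral\<^sup>N (sph_space n) (F C)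
      = (\<integral>\<^sup>+ z. ennreal (C-B) * F A z + ennreal (B-A) * F C z \<partial>sph_space n)"
    using F_m by (simp add: nn_integral_add nn_integral_cmult)
  also have "\<dots> = (\<integral>\<^sup>+ \<theta>. (\<integral>\<^sup>+ r. ennreal (C-B) * F A (r, \<theta>) + ennreal (B-A) * F C (r, \<theta>) \<partial>lborel) \<partial>M2)"
    unfolding SP using F_m[unfolded SP] by (intro P.nn_integral_snd[symmetric]) auto
  also have "\<dots> = (\<integral>\<^sup>+ \<theta>. ennreal (C-B) * (\<integral>\<^sup>+ r. F A (r, \<theta>) \<partial>lborel) + ennreal (B-A) * (\<integral>\<^sup>+ r. F C (r, \<theta>) \<partial>lborel) \<partial>M2)"
    using Fr_m by (intro nn_integral_cong) (simp add: nn_integral_add nn_integral_cmult)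
  also have "\<dots> \<le> (\<integral>\<^sup>+ \<theta>. ennreal (C-A) * (\<integral>\<^sup>+ r. F B (r, \<theta>) \<partial>lborel) \<partial>M2)"
    using inner by (intro nn_integral_mono) auto
  also have "\<dots> = (\<integral>\<^sup>+ \<theta>. (\<integral>\<^sup>+ r. ennreal (C-A) * F B (r, \<theta>) \<partial>lborel) \<partial>M2)"
    using Fr_m by (intro nn_integral_cong) (simp add: nn_integral_cmult)
  also have "\<dots> = (\<integral>\<^sup>+ z. ennreal (C-A) * F B z \<partial>sph_space n)"
    unfolding SP using F_m[unfolded SP] by (intro P.nn_integral_snd) auto
  also have "\<dots> = ennreal (C-A) * integral\<^sup>N (sph_space n) (F B)"
    using F_m by (simp add: nn_integral_cmult)
  finally show ?thesis by (simp add: mu)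
qed




lemma noise_fin:
  assumes f_meas: "(\<lambda>(r, \<theta>). f r \<theta>) \<in> borel_measurable (sph_space CARD('n::{finite,wellorder}))"
    and dim: "CARD('n::{finite,wellorder}) \<ge> 2"
    and f_normalized: "(\<integral>\<^sup>+ (r, \<theta>). ennreal (f r \<theta>) * indicator (sph_dom CARD('n::{finite,wellorder})) (r, \<theta>)
                          \<partial>sph_space CARD('n::{finite,wellorder})) = 1"
  shows "emeasure (noise_distr f :: (real ^ 'n::{finite,wellorder}) measure) E \<noteq> \<infinity>"
proof -
  define n where "n = CARD('n::{finite,wellorder})"
  have n2: "n \<ge> 2" using dim n_def by simp
  have dom_sets: "sph_dom n \<in> sets (sph_space n)"
    unfolding sph_dom_def sph_space_def using angles_sets[OF n2] by auto
  define dens where "dens = (\<lambda>(r, \<theta>). ennreal (f r \<theta>) * indicator (sph_dom n) (r, \<theta>))"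
  have dens_m: "dens \<in> borel_measurable (sph_space n)"
  proof -
    have fm: "(\<lambda>(r, \<theta>). f r \<theta>) \<in> borel_measurable (sph_space n)" using f_meas n_def by simp
    have "(\<lambda>z. ennreal ((\<lambda>(r,\<theta>). f r \<theta>) z) * indicator (sph_dom n) z) \<in> borel_measurable (sph_space n)"
      using dom_sets by (intro borel_measurable_times_ennreal measurable_compose[OF fm measurable_ennreal]
          borel_measurable_indicator)
    moreover have "(\<lambda>z. ennreal ((\<lambda>(r,\<theta>). f r \<theta>) z) * indicator (sph_dom n) z) = dens"
      unfolding dens_def by (auto simp: fun_eq_iff)
    ultimately show ?thesis by simp
  qed
  define g where "g = (\<lambda>(r, \<theta>). sph r \<theta> :: real ^ 'n::{finite,wellorder})"
  have g_m: "g \<in> borel_measurable (sph_space n)" unfolding g_def n_def by (rule sph_meas)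
  have "emeasure (noise_distr f :: (real ^ 'n::{finite,wellorder}) measure) E
      \<le> emeasure (noise_distr f :: (real ^ 'n::{finite,wellorder}) measure) UNIV"
    using emeasure_space[of "noise_distr f :: (real ^ 'n::{finite,wellorder}) measure" E]
    by (simp add: noise_distr_def)
  also have "\<dots> = emeasure (density (sph_space n) dens) (space (sph_space n))"
    unfolding noise_distr_def n_def[symmetric] dens_def[symmetric] g_def[symmetric]
    using g_m by (subst emeasure_distr) auto
  also have "\<dots> = (\<integral>\<^sup>+ z. dens z * indicator (space (sph_space n)) z \<partial>sph_space n)"
    using dens_m by (intro emeasure_density) auto
  also have "\<dots> = (\<integral>\<^sup>+ z. dens z \<partial>sph_space n)"
    by (intro nn_integral_cong) auto
  also have "\<dots> = 1" using f_normalized unfolding dens_def n_def by simp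
  finally show ?thesis by (metis ennreal_one_less_top top.not_eq_extremum order.strict_trans1 infinity_ennreal_def)
qed

lemma mono_deriv:
  fixes P :: "real \<Rightarrow> real"
  assumes cvx: "\<And>x y z. a \<le> x \<Longrightarrow> x < y \<Longrightarrow> y < z \<Longrightarrow> z \<le> b \<Longrightarrow> (z-x)*P y \<le> (z-y)*P x + (y-x)*P z"
    and xy: "a \<le> x" "x < y" "y \<le> b"
    and d1: "(P has_real_derivative d1) (at x)" and d2: "(P has_real_derivative d2) (at y)"
  shows "d1 \<le> d2"
proof -
  define \<sigma> where "\<sigma> = (P y - P x) / (y - x)"
  have l: "d1 \<le> \<sigma>"
  proof (rule ccontr)
    assume "\<not> d1 \<le> \<sigma>"
    then have "0 < d1 - \<sigma>" by simp
    moreover have "((\<lambda>t. P t - \<sigma> * t) has_real_derivative d1 - \<sigma>) (at x)"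
      using d1 by (auto intro!: derivative_eq_intros)
    ultimately obtain d where d: "d > 0" "\<forall>h>0. h < d \<longrightarrow> P x - \<sigma> * x < P (x + h) - \<sigma> * (x + h)"
      using DERIV_pos_inc_right by blast
    define h where "h = min (d/2) ((y - x)/2)"
    have h: "h > 0" "h < d" "x + h < y" using d(1) xy unfolding h_def by (auto simp: min_def field_simps)
    have "(y-x)*P (x+h) \<le> (y-(x+h))*P x + ((x+h)-x)*P y" using cvx[of x "x+h" y] xy h by simp
    then have "(y-x)*(P (x+h) - P x) \<le> h * (P y - P x)" by (simp add: algebra_simps)
    then have "P (x+h) - P x \<le> h * \<sigma>" using xy unfolding \<sigma>_def by (simp add: field_simps)
    moreover have "P x - \<sigma> * x < P (x + h) - \<sigma> * (x + h)" using d h by blast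
    ultimately show False by (simp add: algebra_simps)
  qed
  have r: "\<sigma> \<le> d2"
  proof (rule ccontr)
    assume "\<not> \<sigma> \<le> d2"
    then have "d2 - \<sigma> < 0" by simp
    moreover have "((\<lambda>t. P t - \<sigma> * t) has_real_derivative d2 - \<sigma>) (at y)"
      using d2 by (auto intro!: derivative_eq_intros)
    ultimately obtain d where d: "d > 0" "\<forall>h>0. h < d \<longrightarrow> P y - \<sigma> * y < P (y - h) - \<sigma> * (y - h)"
      using DERIV_neg_dec_left by blast
    define h where "h = min (d/2) ((y - x)/2)"
    have h: "h > 0" "h < d" "x < y - h" using d(1) xy unfolding h_def by (auto simp: min_def field_simps)
    have "(y-x)*P (y-h) \<le> (y-(y-h))*P x + ((y-h)-x)*P y" using cvx[of x "y-h" y] xy h by simp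
    then have "h * (P y - P x) \<le> (y-x)*(P y - P (y-h))" by (simp add: algebra_simps)
    then have "h * \<sigma> \<le> P y - P (y-h)" using xy unfolding \<sigma>_def by (simp add: field_simps)
    moreover have "P y - \<sigma> * y < P (y - h) - \<sigma> * (y - h)" using d h by blast
    ultimately show False by (simp add: algebra_simps)
  qed
  show ?thesis using l r by simp
qed

lemma convex_deriv_final:
  fixes P P1 :: "real \<Rightarrow> real"
  assumes cvx: "\<And>x y z. a \<le> x \<Longrightarrow> x < y \<Longrightarrow> y < z \<Longrightarrow> z \<le> b \<Longrightarrow> (z-x)*P y \<le> (z-y)*P x + (y-x)*P z"
    and ab: "a < b" and Aab: "A \<in> {a..b}"
    and ev: "\<forall>\<^sub>F x in nhds A. (P has_real_derivative P1 x) (at x)"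
    and D: "(P1 has_real_derivative D) (at A)"
  shows "D \<ge> 0"
proof (rule ccontr)
  assume "\<not> D \<ge> 0"
  then have Dn: "D < 0" by simp
  from ev obtain e where e: "e > 0" "\<forall>x. dist x A < e \<longrightarrow> (P has_real_derivative P1 x) (at x)"
    by (auto simp: eventually_nhds_metric dist_commute)
  have dA: "(P has_real_derivative P1 A) (at A)" using e by simp
  show False
  proof (cases "A < b")
    case True
    obtain d where d: "d > 0" "\<forall>h>0. h < d \<longrightarrow> P1 A > P1 (A + h)"
      using DERIV_neg_dec_right[OF D Dn] by blast
    define h where "h = min (d/2) (min (e/2) (b - A))"
    have h: "h > 0" "h < d" "h < e" "A + h \<le> b" using d e True by (auto simp: h_def)
    have d2: "(P has_real_derivative P1 (A+h)) (at (A+h))" using e h by (simp add: dist_norm)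
    have "P1 A \<le> P1 (A + h)"
      by (rule mono_deriv[OF cvx _ _ _ dA d2]) (use Aab h in auto)
    moreover have "P1 A > P1 (A + h)" using d(2) h(1,2) by blast
    ultimately show False by linarith
  next
    case False
    then have Ab: "A = b" using Aab by simp
    obtain d where d: "d > 0" "\<forall>h>0. h < d \<longrightarrow> P1 A < P1 (A - h)"
      using DERIV_neg_dec_left[OF D Dn] by blast
    define h where "h = min (d/2) (min (e/2) (b - a))"
    have h: "h > 0" "h < d" "h < e" "a \<le> A - h" using d e ab Ab by (auto simp: h_def)
    have d1: "(P has_real_derivative P1 (A-h)) (at (A-h))" using e h by (simp add: dist_norm)
    have "P1 (A - h) \<le> P1 A"
      by (rule mono_deriv[OF cvx _ _ _ d1 dA]) (use Aab h in auto)
    moreover have "P1 A < P1 (A - h)" using d(2) h(1,2) by blast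
    ultimately show False by linarith
  qed
qed


theorem theorem7:
  fixes M :: nat
    and p :: "nat \<Rightarrow> real"
    and s :: "nat \<Rightarrow> real ^ 'n::{finite,wellorder}"
    and Om :: "nat \<Rightarrow> (real ^ 'n::{finite,wellorder}) set"
    and f f' :: "real \<Rightarrow> (nat \<Rightarrow> real) \<Rightarrow> real"
    and A1 A2 :: real
  assumes dim: "card (UNIV :: 'n::{finite,wellorder} set) \<ge> 2"
    and M_pos: "M \<ge> 1"
    and priors_nonneg: "\<forall>k<M. p k \<ge> 0"
    and priors_sum: "(\<Sum>k<M. p k) = 1"
    and regions_meas: "\<forall>k<M. Om k \<in> sets borel"
    and regions_disj: "\<forall>k<M. \<forall>j<M. k \<noteq> j \<longrightarrow> Om k \<inter> Om j = {}"
    and center_cvx: "\<forall>k<M. center_convex (s k) (Om k)"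
    and f_meas: "(\<lambda>(r, \<theta>). f r \<theta>) \<in> borel_measurable (sph_space (card (UNIV :: 'n::{finite,wellorder} set)))"
    and f_nonneg: "\<forall>(r, \<theta>) \<in> sph_dom (card (UNIV :: 'n::{finite,wellorder} set)). f r \<theta> \<ge> 0"
    and f_normalized: "(\<integral>\<^sup>+ (r, \<theta>). ennreal (f r \<theta>) * indicator (sph_dom (card (UNIV :: 'n::{finite,wellorder} set))) (r, \<theta>)
                          \<partial>sph_space (card (UNIV :: 'n::{finite,wellorder} set))) = 1"
    and f_diff: "\<forall>\<theta> \<in> sph_angles (card (UNIV :: 'n::{finite,wellorder} set)). \<forall>r > 0.
                   ((\<lambda>\<rho>. f \<rho> \<theta>) has_real_derivative f' r \<theta>) (at r)"
    and A_pos: "0 < A1" and A_lt: "A1 < A2"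
    and f_decr: "\<forall>\<theta> \<in> sph_angles (card (UNIV :: 'n::{finite,wellorder} set)). \<forall>r > 0.
                   ereal A1 * d_min M s Om \<le> ereal r \<and> ereal r \<le> ereal A2 * d_max M s Om
                   \<longrightarrow> f' r \<theta> \<le> 0"
  shows "\<forall>A \<in> {A1..A2}. \<forall>P1 D.
           (\<forall>\<^sub>F x in nhds A.
              (sym_err_rate M p s Om (noise_distr f) has_real_derivative P1 x) (at x))
           \<longrightarrow> (P1 has_real_derivative D) (at A)
           \<longrightarrow> D \<ge> 0"
proof (intro ballI allI impI)
  fix A P1 D
  assume AA: "A \<in> {A1..A2}"
    and ev: "\<forall>\<^sub>F x in nhds A. (sym_err_rate M p s Om (noise_distr f) has_real_derivative P1 x) (at x)"
    and Dd: "(P1 has_real_derivative D) (at A)"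
  define N where "N = (noise_distr f :: (real ^ 'n::{finite,wellorder}) measure)"
  define m where "m k X = measure N {x \<in> space N. s k + (1/X) *\<^sub>R x \<in> Om k}" for k X
  have spN: "space N = UNIV" by (simp add: N_def noise_distr_def)
  have fr: "\<forall>b\<in>frontier (Om k). d_min M s Om \<le> ereal (dist (s k) b) \<and> ereal (dist (s k) b) \<le> d_max M s Om"
    if k: "k < M" for k
  proof
    fix b assume b: "b \<in> frontier (Om k)"
    have "d_min M s Om \<le> ereal (infdist (s k) (frontier (Om k)))"
      unfolding d_min_def using k b by (intro INF_lower) auto
    also have "\<dots> \<le> ereal (dist (s k) b)" using infdist_le[OF b] by simp
    finally have l: "d_min M s Om \<le> ereal (dist (s k) b)" .
    have "ereal (dist (s k) b) \<le> (SUP b\<in>frontier (Om k). ereal (dist (s k) b))"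
      using b by (intro SUP_upper)
    also have "\<dots> \<le> d_max M s Om" unfolding d_max_def using k by (intro SUP_upper) auto
    finally show "d_min M s Om \<le> ereal (dist (s k) b) \<and> ereal (dist (s k) b) \<le> d_max M s Om" using l by simp
  qed
  have mconc: "(z-y) * m k x + (y-x) * m k z \<le> (z-x) * m k y"
    if k: "k < M" and xyz: "A1 \<le> x" "x < y" "y < z" "z \<le> A2" for k x y z
  proof -
    have fin: "emeasure N S \<noteq> \<infinity>" for S
      unfolding N_def by (rule noise_fin) (use f_meas dim f_normalized in auto)
    have E: "emeasure N {x \<in> space N. s k + (1/X) *\<^sub>R x \<in> Om k} = ennreal (m k X)" for X
      unfolding m_def using fin by (simp add: emeasure_eq_ennreal_measure)
    have "ennreal (z-y) * emeasure N {v. s k + (1/x) *\<^sub>R v \<in> Om k}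
       + ennreal (y-x) * emeasure N {v. s k + (1/z) *\<^sub>R v \<in> Om k}
       \<le> ennreal (z-x) * emeasure N {v. s k + (1/y) *\<^sub>R v \<in> Om k}"
    proof -
      have "ennreal (z-y) * emeasure (noise_distr f) {v. s k + (1/x) *\<^sub>R v \<in> Om k}
       + ennreal (y-x) * emeasure (noise_distr f) {v. s k + (1/z) *\<^sub>R v \<in> Om k}
       \<le> ennreal (z-x) * emeasure (noise_distr f :: (real ^ 'n::{finite,wellorder}) measure) {v. s k + (1/y) *\<^sub>R v \<in> Om k}"
      proof (rule concave_k[where f'=f' and La=A1 and Ua=A2])
        show "center_convex (s k) (Om k)" using center_cvx k by auto
        show "Om k \<in> sets borel" using regions_meas k by auto
        show "\<forall>b\<in>frontier (Om k). d_min M s Om \<le> ereal (dist (s k) b) \<and> ereal (dist (s k) b) \<le> d_max M s Om"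
          using fr k by auto
      qed (use dim f_meas f_diff f_decr xyz A_pos in auto)
      then show ?thesis unfolding N_def .
    qed
    then have "ennreal (z-y) * ennreal (m k x) + ennreal (y-x) * ennreal (m k z) \<le> ennreal (z-x) * ennreal (m k y)"
      using E spN by simp
    then have le: "ennreal ((z-y) * m k x + (y-x) * m k z) \<le> ennreal ((z-x) * m k y)"
      using xyz by (simp add: ennreal_mult ennreal_plus[symmetric] m_def)
    have nn: "0 \<le> (z-x) * m k y" using xyz by (simp add: m_def)
    show ?thesis using le ennreal_le_iff[OF nn] by simp
  qed
  define Pe where "Pe = sym_err_rate M p s Om (noise_distr f)"
  have Pe_eq: "Pe X = (\<Sum>k<M. p k * (1 - m k X))" for X
    unfolding Pe_def sym_err_rate_def m_def N_def ..
  have cvx: "(z-x) * Pe y \<le> (z-y) * Pe x + (y-x) * Pe z"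
    if xyz: "A1 \<le> x" "x < y" "y < z" "z \<le> A2" for x y z
  proof -
    have "(z-y) * Pe x + (y-x) * Pe z - (z-x) * Pe y
        = (\<Sum>k<M. (z-y) * (p k * (1 - m k x)) + (y-x) * (p k * (1 - m k z)) - (z-x) * (p k * (1 - m k y)))"
      unfolding Pe_eq by (simp add: sum_distrib_left sum.distrib sum_subtractf)
    also have "\<dots> = (\<Sum>k<M. p k * ((z-x) * m k y - ((z-y) * m k x + (y-x) * m k z)))"
      by (intro sum.cong) (auto simp: algebra_simps)
    also have "\<dots> \<ge> 0"
      using priors_nonneg mconc[OF _ xyz] by (intro sum_nonneg mult_nonneg_nonneg) auto
    finally show ?thesis by simp
  qed
  show "D \<ge> 0"
    by (rule convex_deriv_final[OF cvx A_lt AA ev[folded Pe_def] Dd])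
qed


end
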